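(* Let $f:X\to Y$ be an equivariant map of nominal sets, $u\in X$ an $f$-safe element and $x\in\mathcal V$ with $x\notin\mathsf{bv}_f(u)$. Then $(x,u)$ is $(\theta_Y\circ(\mathcal V\times f))$-safe, where $\theta_Y\circ(\mathcal V\times f):\mathcal V\times X\to[\mathcal V]Y$, $(y,w)\mapsto\langle y\rangle f(w)$.
   Context: Nominal sets over a countably infinite set $\mathcal V$ of names; $\mathsf{supp}$ least finite support. $[\mathcal V]Y$ is the quotient of $\mathcal V\times Y$ by $(x_1,u_1)\sim(x_2,u_2)$ iff $(x_1\ z)\cdot u_1=(x_2\ z)\cdot u_2$ for some $z$ fresh for all four, classes $\langle x\rangle u$; $\theta_Y(x,u)=\langle x\rangle u$. For equivariant $f$: $u$ is $f$-safe if $|\mathsf{supp}(u)|=\max\{|\mathsf{supp}(v)|:v\in f^{-1}(f(u))\}$ (maximum existing); $\mathsf{bv}_f(u)=\mathsf{supp}(u)\setminus\mathsf{supp}(f(u))$. *)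

theory Defs
  imports Main "HOL-Library.Countable"
begin

text \<open>Nominal sets over a countably infinite type of names 'v.
  A nominal set is represented by a type 'x together with an action of
  finitely supported permutations of names.\<close>

definition fperm :: "('v \<Rightarrow> 'v) \<Rightarrow> bool" where
  "fperm p \<longleftrightarrow> bij p \<and> finite {a. p a \<noteq> a}"

definition tr :: "'v \<Rightarrow> 'v \<Rightarrow> 'v \<Rightarrow> 'v" where
  "tr a b = (\<lambda>c. if c = a then b else if c = b then a else c)"

definition supports :: "(('v \<Rightarrow> 'v) \<Rightarrow> 'x \<Rightarrow> 'x) \<Rightarrow> 'v set \<Rightarrow> 'x \<Rightarrow> bool" where
  "supports act A u \<longleftrightarrow> (\<forall>p. fperm p \<and> (\<forall>a\<in>A. p a = a) \<longrightarrow> act p u = u)"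

definition nominal :: "(('v \<Rightarrow> 'v) \<Rightarrow> 'x \<Rightarrow> 'x) \<Rightarrow> bool" where
  "nominal act \<longleftrightarrow> act id = id
     \<and> (\<forall>p q. fperm p \<and> fperm q \<longrightarrow> act (p \<circ> q) = act p \<circ> act q)
     \<and> (\<forall>u. \<exists>A. finite A \<and> supports act A u)"

definition supp :: "(('v \<Rightarrow> 'v) \<Rightarrow> 'x \<Rightarrow> 'x) \<Rightarrow> 'x \<Rightarrow> 'v set" where
  "supp act u = \<Inter>{A. finite A \<and> supports act A u}"

definition equivariant :: "(('v \<Rightarrow> 'v) \<Rightarrow> 'x \<Rightarrow> 'x) \<Rightarrow> (('v \<Rightarrow> 'v) \<Rightarrow> 'y \<Rightarrow> 'y) \<Rightarrow> ('x \<Rightarrow> 'y) \<Rightarrow> bool" where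
  "equivariant actX actY f \<longleftrightarrow> (\<forall>p u. fperm p \<longrightarrow> f (actX p u) = actY p (f u))"

definition pair_act :: "(('v \<Rightarrow> 'v) \<Rightarrow> 'x \<Rightarrow> 'x) \<Rightarrow> ('v \<Rightarrow> 'v) \<Rightarrow> 'v \<times> 'x \<Rightarrow> 'v \<times> 'x" where
  "pair_act act p = (\<lambda>(a, w). (p a, act p w))"

text \<open>Alpha-equivalence on V \<times> Y; the abstraction class <x>u is an element of [V]Y,
  represented as the equivalence class (a set of pairs).\<close>
definition alpha :: "(('v \<Rightarrow> 'v) \<Rightarrow> 'y \<Rightarrow> 'y) \<Rightarrow> 'v \<times> 'y \<Rightarrow> 'v \<times> 'y \<Rightarrow> bool" where
  "alpha act = (\<lambda>(x1, u1) (x2, u2). \<exists>z. z \<noteq> x1 \<and> z \<noteq> x2 \<and> z \<notin> supp act u1 \<and> z \<notin> supp act u2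
        \<and> act (tr x1 z) u1 = act (tr x2 z) u2)"

definition abs_class :: "(('v \<Rightarrow> 'v) \<Rightarrow> 'y \<Rightarrow> 'y) \<Rightarrow> 'v \<Rightarrow> 'y \<Rightarrow> ('v \<times> 'y) set" where
  "abs_class act x u = {q. alpha act (x, u) q}"

definition abs_act :: "(('v \<Rightarrow> 'v) \<Rightarrow> 'y \<Rightarrow> 'y) \<Rightarrow> ('v \<Rightarrow> 'v) \<Rightarrow> ('v \<times> 'y) set \<Rightarrow> ('v \<times> 'y) set" where
  "abs_act act p C = pair_act act p ` C"

definition safe :: "(('v \<Rightarrow> 'v) \<Rightarrow> 'x \<Rightarrow> 'x) \<Rightarrow> ('x \<Rightarrow> 'y) \<Rightarrow> 'x \<Rightarrow> bool" where
  "safe actX f u \<longleftrightarrow> (\<forall>v. f v = f u \<longrightarrow> card (supp actX v) \<le> card (supp actX u))"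

definition bv :: "(('v \<Rightarrow> 'v) \<Rightarrow> 'x \<Rightarrow> 'x) \<Rightarrow> (('v \<Rightarrow> 'v) \<Rightarrow> 'y \<Rightarrow> 'y) \<Rightarrow> ('x \<Rightarrow> 'y) \<Rightarrow> 'x \<Rightarrow> 'v set" where
  "bv actX actY f u = supp actX u - supp actY (f u)"

end

theory Submission
  imports Defs
begin

lemma tr_tr[simp]: "tr a b (tr a b c) = c"
  by (simp add: tr_def)

lemma tr_comp: "tr a b \<circ> tr a b = id"
  by (rule ext) simp

lemma fperm_tr: "fperm (tr a b)"
proof -
  have "bij (tr a b)" by (rule o_bij[of "tr a b"]) (rule ext, simp)+
  moreover have "{c. tr a b c \<noteq> c} \<subseteq> {a, b}" by (auto simp: tr_def)
  then have "finite {c. tr a b c \<noteq> c}" by (rule finite_subset) simp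
  ultimately show ?thesis unfolding fperm_def by blast
qed

lemma fperm_conj: assumes "fperm q" shows "fperm (tr a b \<circ> q \<circ> tr a b)"
proof -
  have t: "bij (tr a b)" using fperm_tr[of a b] unfolding fperm_def by (rule conjunct1)
  have "bij q" using assms unfolding fperm_def by simp
  then have "bij (tr a b \<circ> q \<circ> tr a b)" using t by (intro bij_comp)
  moreover have "{c. (tr a b \<circ> q \<circ> tr a b) c \<noteq> c} \<subseteq> tr a b ` {d. q d \<noteq> d}"
  proof
    fix c assume "c \<in> {c. (tr a b \<circ> q \<circ> tr a b) c \<noteq> c}"
    then have "q (tr a b c) \<noteq> tr a b c" by auto
    then have "tr a b c \<in> {d. q d \<noteq> d}" by simp
    then have "tr a b (tr a b c) \<in> tr a b ` {d. q d \<noteq> d}" by (rule imageI)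
    then show "c \<in> tr a b ` {d. q d \<noteq> d}" by simp
  qed
  moreover have "finite (tr a b ` {d. q d \<noteq> d})" using assms unfolding fperm_def by simp
  ultimately show ?thesis unfolding fperm_def using finite_subset by blast
qed

lemma act_tr_tr: assumes "nominal act" shows "act (tr a b) (act (tr a b) w) = w"
proof -
  have "act (tr a b \<circ> tr a b) = act (tr a b) \<circ> act (tr a b)"
    using assms fperm_tr[of a b] unfolding nominal_def by blast
  moreover have "act id = id" using assms unfolding nominal_def by blast
  ultimately have "act (tr a b) \<circ> act (tr a b) = id" by (simp add: tr_comp)
  then show ?thesis by (metis comp_apply id_apply)
qed

lemma nominal_comp: "nominal act \<Longrightarrow> fperm p \<Longrightarrow> fperm q \<Longrightarrow> act (p \<circ> q) x = act p (act q x)"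
proof -
  assume n: "nominal act" and p: "fperm p" and q: "fperm q"
  have "\<forall>p q. fperm p \<and> fperm q \<longrightarrow> act (p \<circ> q) = act p \<circ> act q"
    using n unfolding nominal_def by (elim conjE)
  then have "act (p \<circ> q) = act p \<circ> act q" using p q by blast
  then show ?thesis by simp
qed

lemma nominal_fin: "nominal act \<Longrightarrow> \<exists>A. finite A \<and> supports act A u"
  unfolding nominal_def by (elim conjE) (erule spec)

lemma supp_sub: "finite A \<Longrightarrow> supports act A w \<Longrightarrow> supp act w \<subseteq> A"
  unfolding supp_def by (rule Inter_lower) simp

lemma supp_finite: assumes "nominal act" shows "finite (supp act w)"
proof -
  obtain A where "finite A" "supports act A w" using nominal_fin[OF assms] by blast
  then show ?thesis by (intro finite_subset[OF supp_sub])
qed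

lemma supports_tr:
  assumes "nominal act" "supports act B w"
  shows "supports act (tr a b ` B) (act (tr a b) w)"
  unfolding supports_def
proof (intro allI impI)
  fix q assume q: "fperm q \<and> (\<forall>c\<in>tr a b ` B. q c = c)"
  let ?r = "tr a b \<circ> q \<circ> tr a b"
  have fr: "fperm ?r" using fperm_conj[OF conjunct1[OF q]] .
  have rB: "\<forall>c\<in>B. ?r c = c"
  proof
    fix c assume "c \<in> B"
    then have "tr a b c \<in> tr a b ` B" by (rule imageI)
    then have h: "q (tr a b c) = tr a b c" using conjunct2[OF q] by (rule bspec[rotated])
    show "?r c = c" unfolding comp_apply h by (rule tr_tr)
  qed
  have sB: "\<forall>p. fperm p \<and> (\<forall>a\<in>B. p a = a) \<longrightarrow> act p w = w"
    using assms(2) unfolding supports_def .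
  have r: "act ?r w = w" by (rule mp[OF spec[OF sB]]) (rule conjI[OF fr rB])
  have e: "q \<circ> tr a b = tr a b \<circ> ?r" by (rule ext) (simp only: comp_apply tr_tr)
  have "act q (act (tr a b) w) = act (q \<circ> tr a b) w"
    by (rule nominal_comp[OF assms(1) conjunct1[OF q] fperm_tr, symmetric])
  also have "\<dots> = act (tr a b) (act ?r w)"
    unfolding e by (rule nominal_comp[OF assms(1) fperm_tr fr])
  finally show "act q (act (tr a b) w) = act (tr a b) w" by (simp only: r)
qed

lemma not_supp: "c \<notin> supp act w \<Longrightarrow> \<exists>B. finite B \<and> supports act B w \<and> c \<notin> B"
  unfolding supp_def by blast

lemma tr_img: "c \<in> tr a b ` B \<longleftrightarrow> tr a b c \<in> B"
proof
  assume "c \<in> tr a b ` B"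
  then obtain d where "d \<in> B" "c = tr a b d" by blast
  then show "tr a b c \<in> B" by simp
next
  assume "tr a b c \<in> B"
  then have "tr a b (tr a b c) \<in> tr a b ` B" by (rule imageI)
  then show "c \<in> tr a b ` B" by simp
qed

lemma supp_act_sub:
  assumes "nominal act" shows "supp act (act (tr a b) w) \<subseteq> tr a b ` supp act w"
proof
  fix c assume c: "c \<in> supp act (act (tr a b) w)"
  show "c \<in> tr a b ` supp act w"
  proof (rule ccontr)
    assume "c \<notin> tr a b ` supp act w"
    then have "tr a b c \<notin> supp act w" unfolding tr_img .
    then obtain B where B: "finite B" "supports act B w" "tr a b c \<notin> B"
      using not_supp[of "tr a b c" act w] by blast
    have s: "supports act (tr a b ` B) (act (tr a b) w)" by (rule supports_tr[OF assms B(2)])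
    have nc: "c \<notin> tr a b ` B" unfolding tr_img by (rule B(3))
    have "supp act (act (tr a b) w) \<subseteq> tr a b ` B"
      by (rule supp_sub[OF finite_imageI[OF B(1)] s])
    then show False using c nc by blast
  qed
qed

lemma supp_act:
  assumes "nominal act" shows "supp act (act (tr a b) w) = tr a b ` supp act w"
proof
  show "supp act (act (tr a b) w) \<subseteq> tr a b ` supp act w" by (rule supp_act_sub[OF assms])
  have "supp act w \<subseteq> tr a b ` supp act (act (tr a b) w)"
    using supp_act_sub[OF assms, of a b "act (tr a b) w"] unfolding act_tr_tr[OF assms] .
  then have "tr a b ` supp act w \<subseteq> tr a b ` tr a b ` supp act (act (tr a b) w)" by (rule image_mono)
  also have "tr a b ` tr a b ` supp act (act (tr a b) w) = supp act (act (tr a b) w)"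
    by (simp only: image_image tr_tr image_ident)
  finally show "tr a b ` supp act w \<subseteq> supp act (act (tr a b) w)" .
qed

lemma card_supp_act:
  assumes "nominal act" shows "card (supp act (act (tr a b) w)) = card (supp act w)"
proof -
  have "inj (tr a b)" by (rule injI) (metis tr_tr)
  then have "inj_on (tr a b) (supp act w)" by (rule inj_on_subset) simp
  then have "card (tr a b ` supp act w) = card (supp act w)" by (rule card_image)
  then show ?thesis unfolding supp_act[OF assms] .
qed

lemma supp_equiv:
  assumes "equivariant actX actY f" shows "supp actY (f w) \<subseteq> supp actX w"
proof -
  have eq: "\<And>p u. fperm p \<Longrightarrow> f (actX p u) = actY p (f u)"
    using assms unfolding equivariant_def by blast
  have sup: "supports actY A (f w)" if h: "supports actX A w" for A
    unfolding supports_def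
  proof (intro allI impI)
    fix p assume p: "fperm p \<and> (\<forall>a\<in>A. p a = a)"
    then have "actX p w = w" using h unfolding supports_def by blast
    then have "f (actX p w) = f w" by simp
    then show "actY p (f w) = f w" unfolding eq[OF conjunct1[OF p]] .
  qed
  show ?thesis unfolding supp_def[of actX]
  proof (rule Inter_greatest)
    fix A assume "A \<in> {A. finite A \<and> supports actX A w}"
    then have A: "finite A" "supports actX A w" by auto
    show "supp actY (f w) \<subseteq> A" by (rule supp_sub[OF A(1) sup[OF A(2)]])
  qed
qed

lemma supp_pair_upper:
  assumes "nominal act"
  shows "supp (pair_act act) (y, w) \<subseteq> insert y (supp act w)"
proof
  fix c assume c: "c \<in> supp (pair_act act) (y, w)"
  show "c \<in> insert y (supp act w)"
  proof (rule ccontr)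
    assume "c \<notin> insert y (supp act w)"
    then have "c \<notin> supp act w" "c \<noteq> y" by auto
    then obtain B where B: "finite B" "supports act B w" "c \<notin> B"
      using not_supp[of c act w] by blast
    have s: "supports (pair_act act) (insert y B) (y, w)"
      unfolding supports_def
    proof (intro allI impI)
      fix p assume p: "fperm p \<and> (\<forall>a\<in>insert y B. p a = a)"
      then have "act p w = w" using B(2) unfolding supports_def by blast
      moreover have "p y = y" using p by blast
      ultimately show "pair_act act p (y, w) = (y, w)" unfolding pair_act_def by simp
    qed
    have "supp (pair_act act) (y, w) \<subseteq> insert y B" by (rule supp_sub[OF _ s]) (simp add: B(1))
    then show False using c \<open>c \<noteq> y\<close> B(3) by blast
  qed
qed

lemma supp_pair_finite:
  assumes "nominal act" shows "finite (supp (pair_act act) (y, w))"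
  by (rule finite_subset[OF supp_pair_upper[OF assms]]) (simp add: supp_finite[OF assms])

lemma supp_pair_lower:
  assumes "nominal act" "infinite (UNIV :: 'v set)"
  shows "insert x (supp act w) \<subseteq> supp (pair_act act) (x::'v, w)"
  unfolding supp_def[of "pair_act act"]
proof (rule Inter_greatest)
  fix A assume "A \<in> {A. finite A \<and> supports (pair_act act) A (x, w)}"
  then have A: "finite A" "supports (pair_act act) A (x, w)" by auto
  have s: "supports act A w" unfolding supports_def
  proof (intro allI impI)
    fix p assume p: "fperm p \<and> (\<forall>a\<in>A. p a = a)"
    then have "pair_act act p (x, w) = (x, w)" using A(2) unfolding supports_def by blast
    then show "act p w = w" unfolding pair_act_def by simp
  qed
  have "supp act w \<subseteq> A" by (rule supp_sub[OF A(1) s])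
  moreover have "x \<in> A"
  proof (rule ccontr)
    assume xA: "x \<notin> A"
    have "finite (insert x A)" using A(1) by simp
    then obtain b where b: "b \<notin> insert x A" using assms(2) by (meson ex_new_if_finite)
    have "\<forall>a\<in>A. tr x b a = a" using xA b by (auto simp: tr_def)
    then have "fperm (tr x b) \<and> (\<forall>a\<in>A. tr x b a = a)" by (intro conjI fperm_tr)
    then have "pair_act act (tr x b) (x, w) = (x, w)" using A(2) unfolding supports_def by blast
    then have "tr x b x = x" unfolding pair_act_def by simp
    then show False using b by (simp add: tr_def split: if_splits)
  qed
  ultimately show "insert x (supp act w) \<subseteq> A" by blast
qed


theorem lemma5p41:
  fixes actX :: "('v::countable \<Rightarrow> 'v) \<Rightarrow> 'x \<Rightarrow> 'x"
    and actY :: "('v \<Rightarrow> 'v) \<Rightarrow> 'y \<Rightarrow> 'y"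
    and f :: "'x \<Rightarrow> 'y" and u :: 'x and x :: 'v
  assumes "infinite (UNIV :: 'v set)"
    and "nominal actX" and "nominal actY"
    and "equivariant actX actY f"
    and "safe actX f u"
    and "x \<notin> bv actX actY f u"
  shows "safe (pair_act actX) (\<lambda>(y, w). abs_class actY y (f w)) (x, u)"
  unfolding safe_def
proof (intro allI impI)
  fix yw assume h0: "(case yw of (y, w) \<Rightarrow> abs_class actY y (f w)) = (case (x, u) of (y, w) \<Rightarrow> abs_class actY y (f w))"
  obtain y w where yw: "yw = (y, w)" by fastforce
  have h: "abs_class actY y (f w) = abs_class actY x (f u)" using h0 unfolding yw by simp
  have finw: "finite (insert y (supp actY (f w)))" using supp_finite[OF assms(3), of "f w"] by simp
  obtain z0 where z0: "z0 \<notin> insert y (supp actY (f w))"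
    using ex_new_if_finite[OF assms(1) finw] by blast
  have "alpha actY (y, f w) (y, f w)"
    unfolding alpha_def using z0 by auto
  then have "(y, f w) \<in> abs_class actY y (f w)" unfolding abs_class_def by simp
  then have "(y, f w) \<in> abs_class actY x (f u)" unfolding h .
  then have "alpha actY (x, f u) (y, f w)" unfolding abs_class_def by simp
  then obtain z where z: "actY (tr x z) (f u) = actY (tr y z) (f w)"
    unfolding alpha_def by auto
  have eq: "\<And>p w. fperm p \<Longrightarrow> f (actX p w) = actY p (f w)"
    using assms(4) unfolding equivariant_def by blast
  define v where "v = actX (tr x z) (actX (tr y z) w)"
  have "f v = actY (tr x z) (f (actX (tr y z) w))" unfolding v_def by (rule eq[OF fperm_tr])
  also have "\<dots> = actY (tr x z) (actY (tr y z) (f w))" unfolding eq[OF fperm_tr] ..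
  also have "\<dots> = actY (tr x z) (actY (tr x z) (f u))" unfolding z ..
  also have "\<dots> = f u" by (rule act_tr_tr[OF assms(3)])
  finally have fv: "f v = f u" .
  have "card (supp actX v) \<le> card (supp actX u)"
    using assms(5) fv unfolding safe_def by blast
  then have cw: "card (supp actX w) \<le> card (supp actX u)"
    unfolding v_def card_supp_act[OF assms(2)] .
  have fw: "finite (supp actX w)" by (rule supp_finite[OF assms(2)])
  have fu: "finite (supp actX u)" by (rule supp_finite[OF assms(2)])
  have up: "card (supp (pair_act actX) yw) \<le> card (insert y (supp actX w))"
    unfolding yw by (rule card_mono) (simp add: fw, rule supp_pair_upper[OF assms(2)])
  have low: "card (insert x (supp actX u)) \<le> card (supp (pair_act actX) (x, u))"
    by (rule card_mono[OF supp_pair_finite[OF assms(2)] supp_pair_lower[OF assms(2,1)]])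
  show "card (supp (pair_act actX) yw) \<le> card (supp (pair_act actX) (x, u))"
  proof (cases "x \<in> supp actX u")
    case True
    then have "x \<in> supp actY (f u)" using assms(6) unfolding bv_def by blast
    then have "tr x z x \<in> tr x z ` supp actY (f u)" by (rule imageI)
    then have "z \<in> supp actY (actY (tr x z) (f u))" unfolding supp_act[OF assms(3)] by (simp add: tr_def)
    then have "z \<in> tr y z ` supp actY (f w)" unfolding z supp_act[OF assms(3)] .
    then have "tr y z z \<in> supp actY (f w)" unfolding tr_img .
    then have "y \<in> supp actY (f w)" by (simp add: tr_def split: if_splits)
    then have "y \<in> supp actX w" using supp_equiv[OF assms(4), of w] by blast
    then have "insert y (supp actX w) = supp actX w" by blast
    then have "card (supp (pair_act actX) yw) \<le> card (supp actX u)" using up cw by simp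
    moreover have "card (supp actX u) \<le> card (insert x (supp actX u))" by (simp add: insert_absorb[OF True])
    ultimately show ?thesis using low by linarith
  next
    case False
    have "card (insert y (supp actX w)) \<le> Suc (card (supp actX w))" by (simp add: card_insert_if fw)
    moreover have "card (insert x (supp actX u)) = Suc (card (supp actX u))" using False fu by simp
    ultimately show ?thesis using up low cw by linarith
  qed
qed

end
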